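(* In the qubit setting of the context, the optimal value of (PP) is $P_{succ}=\frac{1-\cos^2(2n\alpha)}{2(1-\cos(2n\alpha)\cos(2\alpha))}$ if $\cos(2n\alpha)>\frac{1}{\cos(2\alpha)+\sin(2\alpha)}$, and $P_{succ}=1-\cos(2n\alpha)\sin(2\alpha)$ if $\cos(2n\alpha)\le\frac{1}{\cos(2\alpha)+\sin(2\alpha)}$.
   Context: Fix an integer $n\ge1$ and real $\alpha$ with $0<\alpha<\pi/(4n)$. On $\mathbb{C}^2$ with computational basis $\{|0\rangle,|1\rangle\}$ let $|+\rangle=(|0\rangle+|1\rangle)/\sqrt2$, $U_0=e^{i\alpha}|0\rangle\langle0|+e^{-i\alpha}|1\rangle\langle1|$, $U_1=e^{-i\alpha}|0\rangle\langle0|+e^{i\alpha}|1\rangle\langle1|$, $|\psi^*_{n,i}\rangle=(U_i^* )^n|+\rangle$ (complex conjugation in the computational basis). For $A=\sum_{ij}A_{ij}|i\rangle\langle j|$ set $|A\rangle\!\rangle:=\sum_{ij}A_{ij}|j\rangle|i\rangle$. Systems $\mathcal H_0$ (memory), $\mathcal H_1$ (input), $\mathcal H_2$ (output) are copies of $\mathbb{C}^2$. The Choi operator of a linear map $\mathcal R:L(\mathcal H_0\otimes\mathcal H_1)\to L(\mathcal H_2)$ is $R=(\mathcal I\otimes\mathcal R)(|I\rangle\!\rangle\langle\!\langle I|)$. Let $D=\frac18\sum_{i=0,1}|\psi^*_{n,i}\rangle\langle\psi^*_{n,i}|\otimes|U_i\rangle\!\rangle\langle\!\langle U_i|$. Problem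 (PP): maximize $\mathrm{Tr}[R_sD]$ over $R_s\ge0$ with $\mathrm{Tr}_2R_s\le I$ satisfying the perfect retrieval condition: there are $\lambda_0,\lambda_1\ge0$ with $\langle\psi^*_{n,i}|R_s|\psi^*_{n,i}\rangle=\lambda_i|U_i\rangle\!\rangle\langle\!\langle U_i|$ for $i=0,1$ (partial inner product on $\mathcal H_0$); then $\mathrm{Tr}[R_sD]=(\lambda_0+\lambda_1)/2$ is the average success probability of perfectly retrieving $U_i$ from memory state $U_i^n|+\rangle$. *)

theory Defs
  imports Complex_Main
begin

text \<open>Operators on C^2 are functions nat => nat => complex
 (A j k = matrix entry <j|A|k>), vectors are nat => complex. Three-qubit
 operators on H0 (x) H1 (x) H2 are indexed by triples (a,b,c), a in H0 (memory),
 b in H1 (input), c in H2 (output).\<close>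

definition qb :: "nat set" where "qb = {0, 1}"

definition U0 :: "real \<Rightarrow> nat \<Rightarrow> nat \<Rightarrow> complex" where
  "U0 \<alpha> j k = (if j = k then (if j = 0 then cis \<alpha> else cis (- \<alpha>)) else 0)"

definition U1 :: "real \<Rightarrow> nat \<Rightarrow> nat \<Rightarrow> complex" where
  "U1 \<alpha> j k = (if j = k then (if j = 0 then cis (- \<alpha>) else cis \<alpha>) else 0)"

definition Uop :: "real \<Rightarrow> nat \<Rightarrow> nat \<Rightarrow> nat \<Rightarrow> complex" where
  "Uop \<alpha> i = (if i = 0 then U0 \<alpha> else U1 \<alpha>)"

definition ket_plus :: "nat \<Rightarrow> complex" where
  "ket_plus j = (if j \<in> qb then 1 / complex_of_real (sqrt 2) else 0)"

definition conj_op :: "(nat \<Rightarrow> nat \<Rightarrow> complex) \<Rightarrow> nat \<Rightarrow> nat \<Rightarrow> complex" where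
  "conj_op A j k = cnj (A j k)"

definition mmul2 :: "(nat \<Rightarrow> nat \<Rightarrow> complex) \<Rightarrow> (nat \<Rightarrow> nat \<Rightarrow> complex) \<Rightarrow> nat \<Rightarrow> nat \<Rightarrow> complex" where
  "mmul2 A B j k = (\<Sum>l\<in>qb. A j l * B l k)"

definition id2 :: "nat \<Rightarrow> nat \<Rightarrow> complex" where
  "id2 j k = (if j = k \<and> j \<in> qb then 1 else 0)"

definition mpow2 :: "(nat \<Rightarrow> nat \<Rightarrow> complex) \<Rightarrow> nat \<Rightarrow> nat \<Rightarrow> nat \<Rightarrow> complex" where
  "mpow2 A n = (mmul2 A ^^ n) id2"

definition mvec2 :: "(nat \<Rightarrow> nat \<Rightarrow> complex) \<Rightarrow> (nat \<Rightarrow> complex) \<Rightarrow> nat \<Rightarrow> complex" where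
  "mvec2 A v j = (\<Sum>k\<in>qb. A j k * v k)"

definition psi_star :: "nat \<Rightarrow> real \<Rightarrow> nat \<Rightarrow> nat \<Rightarrow> complex" where
  "psi_star n \<alpha> i = mvec2 (mpow2 (conj_op (Uop \<alpha> i)) n) ket_plus"

text \<open>|A>> = sum_{ij} A_ij |j>|i>, a vector on H1 (x) H2 indexed by (b,c):
 coefficient of |b>|c> is A c b.\<close>
definition dket :: "(nat \<Rightarrow> nat \<Rightarrow> complex) \<Rightarrow> nat \<times> nat \<Rightarrow> complex" where
  "dket A = (\<lambda>(b, c). A c b)"

definition B2 :: "(nat \<times> nat) set" where "B2 = qb \<times> qb"
definition B3 :: "(nat \<times> nat \<times> nat) set" where "B3 = qb \<times> qb \<times> qb"

definition psd_on :: "'a set \<Rightarrow> ('a \<Rightarrow> 'a \<Rightarrow> complex) \<Rightarrow> bool" where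
  "psd_on I A \<longleftrightarrow> (\<forall>v :: 'a \<Rightarrow> complex.
     (\<Sum>x\<in>I. \<Sum>y\<in>I. cnj (v x) * A x y * v y) \<in> \<real> \<and>
     Re (\<Sum>x\<in>I. \<Sum>y\<in>I. cnj (v x) * A x y * v y) \<ge> 0)"

definition ptrace2 :: "(nat \<times> nat \<times> nat \<Rightarrow> nat \<times> nat \<times> nat \<Rightarrow> complex) \<Rightarrow> nat \<times> nat \<Rightarrow> nat \<times> nat \<Rightarrow> complex" where
  "ptrace2 R = (\<lambda>(a, b) (a', b'). \<Sum>c\<in>qb. R (a, b, c) (a', b', c))"

definition ident_on :: "'a set \<Rightarrow> 'a \<Rightarrow> 'a \<Rightarrow> complex" where
  "ident_on I x y = (if x = y \<and> x \<in> I then 1 else 0)"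

definition pinner0 :: "(nat \<Rightarrow> complex) \<Rightarrow> (nat \<times> nat \<times> nat \<Rightarrow> nat \<times> nat \<times> nat \<Rightarrow> complex) \<Rightarrow> nat \<times> nat \<Rightarrow> nat \<times> nat \<Rightarrow> complex" where
  "pinner0 \<phi> R = (\<lambda>(b, c) (b', c'). \<Sum>a\<in>qb. \<Sum>a'\<in>qb. cnj (\<phi> a) * R (a, b, c) (a', b', c') * \<phi> a')"

definition outer :: "('a \<Rightarrow> complex) \<Rightarrow> 'a \<Rightarrow> 'a \<Rightarrow> complex" where
  "outer v x y = v x * cnj (v y)"

definition Dop :: "nat \<Rightarrow> real \<Rightarrow> nat \<times> nat \<times> nat \<Rightarrow> nat \<times> nat \<times> nat \<Rightarrow> complex" where
  "Dop n \<alpha> = (\<lambda>(a, b, c) (a', b', c'). (1/8) * (\<Sum>i\<in>qb.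
      outer (psi_star n \<alpha> i) a a' * outer (dket (Uop \<alpha> i)) (b, c) (b', c')))"

definition trace_on :: "'a set \<Rightarrow> ('a \<Rightarrow> 'a \<Rightarrow> complex) \<Rightarrow> complex" where
  "trace_on I A = (\<Sum>x\<in>I. A x x)"

definition mprod_on :: "'a set \<Rightarrow> ('a \<Rightarrow> 'a \<Rightarrow> complex) \<Rightarrow> ('a \<Rightarrow> 'a \<Rightarrow> complex) \<Rightarrow> 'a \<Rightarrow> 'a \<Rightarrow> complex" where
  "mprod_on I A B x y = (\<Sum>z\<in>I. A x z * B z y)"

definition PP_feasible :: "nat \<Rightarrow> real \<Rightarrow> (nat \<times> nat \<times> nat \<Rightarrow> nat \<times> nat \<times> nat \<Rightarrow> complex) \<Rightarrow> bool" where
  "PP_feasible n \<alpha> R \<longleftrightarrow>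
     psd_on B3 R \<and>
     psd_on B2 (\<lambda>x y. ident_on B2 x y - ptrace2 R x y) \<and>
     (\<exists>lam0 lam1 :: real. lam0 \<ge> 0 \<and> lam1 \<ge> 0 \<and>
        (\<forall>i\<in>qb. \<forall>x\<in>B2. \<forall>y\<in>B2.
           pinner0 (psi_star n \<alpha> i) R x y =
           complex_of_real (if i = 0 then lam0 else lam1) * outer (dket (Uop \<alpha> i)) x y))"

text \<open>Objective Tr[R D] (a real number for feasible R; we take the real part).\<close>
definition PP_objective :: "nat \<Rightarrow> real \<Rightarrow> (nat \<times> nat \<times> nat \<Rightarrow> nat \<times> nat \<times> nat \<Rightarrow> complex) \<Rightarrow> real" where
  "PP_objective n \<alpha> R = Re (trace_on B3 (mprod_on B3 R (Dop n \<alpha>)))"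

end

theory Submission
  imports Defs
begin

lemma qb_eq: "qb = {0,1}" by (simp add: qb_def)
lemma sum_qb: "(\<Sum>a\<in>qb. f a) = f 0 + f (1::nat)" by (simp add: qb_def)
lemma B2_eq: "B2 = {(0,0),(0,1),(1,0),(1,1)}" by (auto simp: B2_def qb_def)
lemma sum_B2: "(\<Sum>x\<in>B2. f x) = f (0,0) + f (0,1) + f (1,0) + f (1,1)"
  by (simp add: B2_eq add.assoc)
lemma B3_eq: "B3 = {(0,0,0),(0,0,1),(0,1,0),(0,1,1),(1,0,0),(1,0,1),(1,1,0),(1,1,1)}" by (auto simp: B3_def qb_def)
lemma sum_B3: "(\<Sum>x\<in>B3. f x) = f (0,0,0) + f (0,0,1) + f (0,1,0) + f (0,1,1) + f (1,0,0) + f (1,0,1) + f (1,1,0) + f (1,1,1)"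
  by (simp add: B3_eq add.assoc)

lemma mpow2_diag:
  assumes A: "\<forall>j\<in>qb. \<forall>k\<in>qb. A j k = (if j = k then d j else 0)"
  shows "j\<in>qb \<Longrightarrow> k\<in>qb \<Longrightarrow> mpow2 A n j k = (if j = k then d j ^ n else 0)"
proof (induction n arbitrary: j k)
  case 0
  then show ?case by (simp add: mpow2_def id2_def)
next
  case (Suc n)
  have "mpow2 A (Suc n) j k = (\<Sum>l\<in>qb. A j l * mpow2 A n l k)"
    by (simp add: mpow2_def mmul2_def)
  also have "\<dots> = A j 0 * mpow2 A n 0 k + A j 1 * mpow2 A n 1 k" by (simp add: sum_qb)
  also have "\<dots> = (if j = k then d j ^ Suc n else 0)"
    using Suc A by (auto simp: qb_def)
  finally show ?case .
qed

lemma cis_pow: "cis t ^ n = cis (real n * t)" by (simp add: DeMoivre)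

lemma psi_vals:
  "psi_star n \<alpha> 0 0 = cnj (cis (real n * \<alpha>)) / complex_of_real (sqrt 2)"
  "psi_star n \<alpha> 0 1 = cis (real n * \<alpha>) / complex_of_real (sqrt 2)"
  "psi_star n \<alpha> 1 0 = cis (real n * \<alpha>) / complex_of_real (sqrt 2)"
  "psi_star n \<alpha> 1 1 = cnj (cis (real n * \<alpha>)) / complex_of_real (sqrt 2)"
proof -
  have d0: "\<forall>j\<in>qb. \<forall>k\<in>qb. conj_op (Uop \<alpha> 0) j k = (if j = k then (if j = 0 then cis (-\<alpha>) else cis \<alpha>) else 0)"
    by (auto simp: qb_def conj_op_def Uop_def U0_def cis_cnj)
  have d1: "\<forall>j\<in>qb. \<forall>k\<in>qb. conj_op (Uop \<alpha> (Suc 0)) j k = (if j = k then (if j = 0 then cis \<alpha> else cis (-\<alpha>)) else 0)"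
    by (auto simp: qb_def conj_op_def Uop_def U1_def cis_cnj)
  note m0 = mpow2_diag[OF d0] and m1 = mpow2_diag[OF d1]
  show "psi_star n \<alpha> 0 0 = cnj (cis (real n * \<alpha>)) / complex_of_real (sqrt 2)"
    by (simp add: psi_star_def mvec2_def sum_qb m0 qb_def ket_plus_def cis_pow cis_cnj)
  show "psi_star n \<alpha> 0 1 = cis (real n * \<alpha>) / complex_of_real (sqrt 2)"
    by (simp add: psi_star_def mvec2_def sum_qb m0 qb_def ket_plus_def cis_pow cis_cnj)
  show "psi_star n \<alpha> 1 0 = cis (real n * \<alpha>) / complex_of_real (sqrt 2)"
    by (simp add: psi_star_def mvec2_def sum_qb m1 qb_def ket_plus_def cis_pow cis_cnj)
  show "psi_star n \<alpha> 1 1 = cnj (cis (real n * \<alpha>)) / complex_of_real (sqrt 2)"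
    by (simp add: psi_star_def mvec2_def sum_qb m1 qb_def ket_plus_def cis_pow cis_cnj)
qed

lemma u_vals:
  "dket (Uop \<alpha> 0) (0,0) = cis \<alpha>" "dket (Uop \<alpha> 0) (1,1) = cnj (cis \<alpha>)"
  "dket (Uop \<alpha> 0) (0,1) = 0" "dket (Uop \<alpha> 0) (1,0) = 0"
  "dket (Uop \<alpha> 1) (0,0) = cnj (cis \<alpha>)" "dket (Uop \<alpha> 1) (1,1) = cis \<alpha>"
  "dket (Uop \<alpha> 1) (0,1) = 0" "dket (Uop \<alpha> 1) (1,0) = 0"
  by (simp_all add: dket_def Uop_def U0_def U1_def cis_cnj)

lemma u_vals':
  "dket (Uop \<alpha> 0) (Suc 0,Suc 0) = cnj (cis \<alpha>)"
  "dket (Uop \<alpha> 0) (0,Suc 0) = 0" "dket (Uop \<alpha> 0) (Suc 0,0) = 0"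
  "dket (Uop \<alpha> (Suc 0)) (0,0) = cnj (cis \<alpha>)" "dket (Uop \<alpha> (Suc 0)) (Suc 0,Suc 0) = cis \<alpha>"
  "dket (Uop \<alpha> (Suc 0)) (0,Suc 0) = 0" "dket (Uop \<alpha> (Suc 0)) (Suc 0,0) = 0"
  by (simp_all add: dket_def Uop_def U0_def U1_def cis_cnj)


lemma cc1: "cnj (cis a) * cis a = 1" by (simp add: cis_cnj cis_mult)
lemma cc2: "cis a * cnj (cis a) = 1" by (simp add: cis_cnj cis_mult)

definition Bf :: "(nat\<times>nat\<times>nat \<Rightarrow> nat\<times>nat\<times>nat \<Rightarrow> complex) \<Rightarrow> (nat\<times>nat\<times>nat\<Rightarrow>complex) \<Rightarrow> (nat\<times>nat\<times>nat\<Rightarrow>complex) \<Rightarrow> complex" where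
 "Bf R v w = (\<Sum>x\<in>B3. \<Sum>y\<in>B3. cnj (v x) * R x y * w y)"

definition tens :: "(nat \<Rightarrow> complex) \<Rightarrow> (nat\<times>nat \<Rightarrow> complex) \<Rightarrow> nat\<times>nat\<times>nat \<Rightarrow> complex" where
 "tens \<phi> x = (\<lambda>(a,b,c). \<phi> a * x (b,c))"

lemma Bf_tens: "Bf R (tens \<phi> x) (tens \<phi> y) = (\<Sum>p\<in>B2. \<Sum>q\<in>B2. cnj (x p) * pinner0 \<phi> R p q * y q)"
  unfolding Bf_def tens_def pinner0_def sum_B3 sum_B2 sum_qb
  by (simp add: algebra_simps)

lemma Bf_addL: "Bf R (\<lambda>x. v x + v' x) w = Bf R v w + Bf R v' w"
  unfolding Bf_def by (simp add: algebra_simps sum.distrib)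
lemma Bf_addR: "Bf R w (\<lambda>x. v x + v' x) = Bf R w v + Bf R w v'"
  unfolding Bf_def by (simp add: algebra_simps sum.distrib)
lemma Bf_smultL: "Bf R (\<lambda>x. a * v x) w = cnj a * Bf R v w"
  unfolding Bf_def by (simp add: algebra_simps sum_distrib_left)
lemma Bf_smultR: "Bf R w (\<lambda>x. a * v x) = a * Bf R w v"
  unfolding Bf_def by (simp add: algebra_simps sum_distrib_left)

lemma psd_Bf: "psd_on B3 R \<Longrightarrow> Bf R v v \<in> \<real> \<and> 0 \<le> Re (Bf R v v)"
  unfolding psd_on_def Bf_def by blast

lemma trace_pair:
  "trace_on B3 (mprod_on B3 R (\<lambda>z x. k * (A z * cnj (A x) + B z * cnj (B x)))) = k * (Bf R A A + Bf R B B)"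
  unfolding trace_on_def mprod_on_def Bf_def
  by (simp add: sum_distrib_left sum.distrib algebra_simps)

lemma Dop_eq: "Dop n \<alpha> = (\<lambda>z x. (1/8) * (tens (psi_star n \<alpha> 0) (dket (Uop \<alpha> 0)) z * cnj (tens (psi_star n \<alpha> 0) (dket (Uop \<alpha> 0)) x)
   + tens (psi_star n \<alpha> 1) (dket (Uop \<alpha> 1)) z * cnj (tens (psi_star n \<alpha> 1) (dket (Uop \<alpha> 1)) x)))"
  by (auto simp: Dop_def tens_def outer_def sum_qb fun_eq_iff algebra_simps)

lemma unorm: "i \<in> qb \<Longrightarrow> (\<Sum>p\<in>B2. cnj (dket (Uop \<alpha> i) p) * dket (Uop \<alpha> i) p) = 2"
  by (auto simp: qb_def sum_B2 u_vals u_vals' cc1 cc2)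

definition cons_ok where
 "cons_ok n \<alpha> R l0 l1 \<longleftrightarrow> (\<forall>i\<in>qb. \<forall>x\<in>B2. \<forall>y\<in>B2.
           pinner0 (psi_star n \<alpha> i) R x y =
           complex_of_real (if i = 0 then l0 else l1) * outer (dket (Uop \<alpha> i)) x y)"

lemma Bf_cons:
  assumes "cons_ok n \<alpha> R l0 l1" "i \<in> qb"
  shows "Bf R (tens (psi_star n \<alpha> i) x) (tens (psi_star n \<alpha> i) y) =
     complex_of_real (if i = 0 then l0 else l1) * (\<Sum>p\<in>B2. cnj (x p) * dket (Uop \<alpha> i) p) * (\<Sum>q\<in>B2. cnj (dket (Uop \<alpha> i) q) * y q)"
proof -
  have "Bf R (tens (psi_star n \<alpha> i) x) (tens (psi_star n \<alpha> i) y) =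
     (\<Sum>p\<in>B2. \<Sum>q\<in>B2. cnj (x p) * (complex_of_real (if i = 0 then l0 else l1) * outer (dket (Uop \<alpha> i)) p q) * y q)"
    unfolding Bf_tens using assms by (auto simp: cons_ok_def intro!: sum.cong)
  also have "\<dots> = complex_of_real (if i = 0 then l0 else l1) * (\<Sum>p\<in>B2. cnj (x p) * dket (Uop \<alpha> i) p) * (\<Sum>q\<in>B2. cnj (dket (Uop \<alpha> i) q) * y q)"
    unfolding outer_def sum_B2 by (simp add: algebra_simps)
  finally show ?thesis .
qed

lemma objective:
  assumes "cons_ok n \<alpha> R l0 l1"
  shows "PP_objective n \<alpha> R = (l0 + l1) / 2"
proof -
  have 0: "Bf R (tens (psi_star n \<alpha> 0) (dket (Uop \<alpha> 0))) (tens (psi_star n \<alpha> 0) (dket (Uop \<alpha> 0))) = l0 * 4"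
    using Bf_cons[OF assms, of 0] unorm[of 0] by (simp add: qb_def)
  have 1: "Bf R (tens (psi_star n \<alpha> 1) (dket (Uop \<alpha> 1))) (tens (psi_star n \<alpha> 1) (dket (Uop \<alpha> 1))) = l1 * 4"
    using Bf_cons[OF assms, of 1] unorm[of 1] by (simp add: qb_def)
  show ?thesis unfolding PP_objective_def Dop_eq trace_pair 0 1 by simp
qed


lemma real_quad_zero:
  fixes a b :: real
  assumes "\<And>t. a * t + b * t^2 \<ge> 0"
  shows "a = 0"
proof (rule ccontr)
  assume "a \<noteq> 0"
  define B where "B = \<bar>b\<bar> + 1"
  have B: "B > 0" "b \<le> B" by (auto simp: B_def)
  define t where "t = - a / (2 * B)"
  have "a * t + b * t^2 = -(a^2 / (2*B)) + b * a^2 / (4 * B^2)"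
    by (simp add: t_def power2_eq_square field_simps)
  also have "b * a^2 / (4 * B^2) \<le> B * a^2 / (4 * B^2)"
    using B by (intro divide_right_mono mult_right_mono) auto
  also have "B * a^2 / (4 * B^2) = a^2 / (4*B)" using B by (simp add: power2_eq_square field_simps)
  finally have "a * t + b * t^2 \<le> -(a^2/(4*B))" using B by (simp add: field_simps)
  moreover have "a^2/(4*B) > 0" using B \<open>a \<noteq> 0\<close> by simp
  ultimately show False using assms[of t] by linarith
qed

lemma Bf_herm:
  assumes "psd_on B3 R"
  shows "Bf R w v = cnj (Bf R v w)"
proof -
  have h1: "Bf R (\<lambda>x. v x + w x) (\<lambda>x. v x + w x) = Bf R v v + Bf R v w + Bf R w v + Bf R w w"
    by (simp add: Bf_addL Bf_addR)
  have h2: "Bf R (\<lambda>x. v x + \<i> * w x) (\<lambda>x. v x + \<i> * w x) = Bf R v v + \<i> * Bf R v w - \<i> * Bf R w v + Bf R w w"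
    by (simp add: Bf_addL Bf_addR Bf_smultL Bf_smultR algebra_simps)
  have r: "Im (Bf R u u) = 0" for u using psd_Bf[OF assms, of u] by (simp add: complex_is_Real_iff)
  from r[of "\<lambda>x. v x + w x"] r[of v] r[of w] h1 have a: "Im (Bf R v w) + Im (Bf R w v) = 0" by simp
  from r[of "\<lambda>x. v x + \<i> * w x"] r[of v] r[of w] h2 have b: "Re (Bf R v w) - Re (Bf R w v) = 0" by simp
  show ?thesis using a b by (simp add: complex_eq_iff)
qed

lemma Bf_kernel:
  assumes "psd_on B3 R" "Bf R v v = 0"
  shows "Bf R v w = 0"
proof -
  have re0': "2 * Re (Bf R v u) = 0" for u
  proof (rule real_quad_zero[of _ "Re (Bf R u u)"])
    fix t :: real
    have "Bf R (\<lambda>x. v x + complex_of_real t * u x) (\<lambda>x. v x + complex_of_real t * u x)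
      = Bf R v v + complex_of_real t * Bf R v u + complex_of_real t * Bf R u v + complex_of_real t * complex_of_real t * Bf R u u"
      by (simp add: Bf_addL Bf_addR Bf_smultL Bf_smultR algebra_simps)
    also have "\<dots> = complex_of_real t * (Bf R v u + cnj (Bf R v u)) + complex_of_real t * complex_of_real t * Bf R u u"
      using assms Bf_herm[OF assms(1), of u v] by (simp add: distrib_left)
    finally have "Re (Bf R (\<lambda>x. v x + complex_of_real t * u x) (\<lambda>x. v x + complex_of_real t * u x)) = 2 * Re (Bf R v u) * t + Re (Bf R u u) * t^2"
      by (simp add: power2_eq_square algebra_simps)
    then show "2 * Re (Bf R v u) * t + Re (Bf R u u) * t^2 \<ge> 0"
      using psd_Bf[OF assms(1)] by metis
  qed
  have re0: "Re (Bf R v u) = 0" for u using re0'[of u] by simp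
  have "Re (Bf R v (\<lambda>x. \<i> * w x)) = 0" by (rule re0)
  then have "Im (Bf R v w) = 0" by (simp add: Bf_smultR)
  with re0[of w] show ?thesis by (simp add: complex_eq_iff)
qed

definition Eb :: "nat \<Rightarrow> nat \<times> nat \<Rightarrow> complex" where
  "Eb b = (\<lambda>p. if p = (b,b) then 1 else 0)"

lemma block_ident:
  assumes "b \<in> qb"
  shows "(\<Sum>x\<in>B2. \<Sum>y\<in>B2. cnj ((\<lambda>(a,b'). \<phi> a * (if b' = b then 1 else 0)) x) * (ident_on B2 x y - ptrace2 R x y) * (\<lambda>(a,b'). \<phi> a * (if b' = b then 1 else 0)) y)
   = (cnj (\<phi> 0) * \<phi> 0 + cnj (\<phi> 1) * \<phi> 1) - (Bf R (\<lambda>(a,b',c'). \<phi> a * (if b' = b then 1 else 0) * (if c' = 0 then 1 else 0)) (\<lambda>(a,b',c'). \<phi> a * (if b' = b then 1 else 0) * (if c' = 0 then 1 else 0))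
     + Bf R (\<lambda>(a,b',c'). \<phi> a * (if b' = b then 1 else 0) * (if c' = 1 then 1 else 0)) (\<lambda>(a,b',c'). \<phi> a * (if b' = b then 1 else 0) * (if c' = 1 then 1 else 0)))"
  using assms unfolding qb_eq
  by (auto simp: sum_B2 sum_B3 Bf_def ident_on_def B2_eq ptrace2_def sum_qb algebra_simps)


lemma cnj_real_Re: "z \<in> \<real> \<Longrightarrow> Re z = Re z" by simp

lemma block:
  assumes R: "psd_on B3 R" and I: "psd_on B2 (\<lambda>x y. ident_on B2 x y - ptrace2 R x y)" and b: "b \<in> qb"
  shows "Re (Bf R (tens \<phi> (Eb b)) (tens \<phi> (Eb b))) \<le> Re (cnj (\<phi> 0) * \<phi> 0 + cnj (\<phi> 1) * \<phi> 1)"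
proof -
  define W where "W c = (\<lambda>(a,b',c'). \<phi> a * (if b' = b then 1 else 0) * (if c' = c then 1 else (0::complex)))" for c :: nat
  have Q: "0 \<le> Re (\<Sum>x\<in>B2. \<Sum>y\<in>B2. cnj ((\<lambda>(a,b'). \<phi> a * (if b' = b then 1 else 0)) x) * (ident_on B2 x y - ptrace2 R x y) * (\<lambda>(a,b'). \<phi> a * (if b' = b then 1 else 0)) y)"
    using I unfolding psd_on_def by blast
  have k: "Re (cnj (\<phi> 0) * \<phi> 0 + cnj (\<phi> 1) * \<phi> 1) - (Re (Bf R (W 0) (W 0)) + Re (Bf R (W 1) (W 1))) \<ge> 0"
    using Q unfolding block_ident[OF b] W_def by simp
  have p0: "Re (Bf R (W 0) (W 0)) \<ge> 0" "Re (Bf R (W 1) (W 1)) \<ge> 0" using psd_Bf[OF R] by auto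
  have t: "tens \<phi> (Eb b) = W b" using b
    by (auto simp: tens_def Eb_def W_def fun_eq_iff qb_def)
  show ?thesis using k p0 b unfolding t by (auto simp: qb_def)
qed

context
  fixes n :: nat and \<alpha> :: real and R l0 l1
  assumes R: "psd_on B3 R" and C: "cons_ok n \<alpha> R l0 l1"
begin

abbreviation "XX i \<equiv> tens (psi_star n \<alpha> i) (dket (Uop \<alpha> i))"

lemma coef_diag:
  assumes "b \<in> qb" "i \<in> qb"
  shows "Bf R (tens (psi_star n \<alpha> i) (Eb b)) (tens (psi_star n \<alpha> i) (Eb b)) = complex_of_real (if i = 0 then l0 else l1)"
  using Bf_cons[OF C assms(2), of "Eb b" "Eb b"] assms
  by (auto simp: qb_def sum_B2 Eb_def u_vals u_vals' cc1 cc2)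

lemma coef_off:
  assumes b: "b \<in> qb"
  shows "Bf R (tens (psi_star n \<alpha> 0) (Eb b)) (tens (psi_star n \<alpha> 1) (Eb b)) =
     (dket (Uop \<alpha> 0) (b,b) / 2) * (cnj (dket (Uop \<alpha> 1) (b,b)) / 2) * Bf R (XX 0) (XX 1)"
proof -
  define g where "g = cnj (dket (Uop \<alpha> 0) (b,b)) / 2"
  define g' where "g' = cnj (dket (Uop \<alpha> 1) (b,b)) / 2"
  define Y0 where "Y0 = tens (psi_star n \<alpha> 0) (\<lambda>p. Eb b p - g * dket (Uop \<alpha> 0) p)"
  define Y1 where "Y1 = tens (psi_star n \<alpha> 1) (\<lambda>p. Eb b p - g' * dket (Uop \<alpha> 1) p)"
  have z0: "Bf R Y0 Y0 = 0"
    unfolding Y0_def using Bf_cons[OF C, of 0] b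
    by (auto simp: qb_def sum_B2 Eb_def u_vals u_vals' cc1 cc2 g_def)
  have z1: "Bf R Y1 Y1 = 0"
    unfolding Y1_def using Bf_cons[OF C, of 1] b
    by (auto simp: qb_def sum_B2 Eb_def u_vals u_vals' cc1 cc2 g'_def)
  have e0: "tens (psi_star n \<alpha> 0) (Eb b) = (\<lambda>x. Y0 x + g * XX 0 x)"
    by (auto simp: Y0_def tens_def fun_eq_iff algebra_simps)
  have e1: "tens (psi_star n \<alpha> 1) (Eb b) = (\<lambda>x. Y1 x + g' * XX 1 x)"
    by (auto simp: Y1_def tens_def fun_eq_iff algebra_simps)
  have k0: "Bf R Y0 w = 0" for w using Bf_kernel[OF R z0] .
  have k1: "Bf R w Y1 = 0" for w using Bf_kernel[OF R z1] Bf_herm[OF R, of w Y1] by simp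
  show ?thesis unfolding e0 e1 Bf_addL Bf_addR Bf_smultL Bf_smultR k0 k1
    by (simp add: g_def g'_def)
qed

end

lemma regime1_real:
  fixes c k s L t x :: real
  assumes ks: "k^2 + s^2 = 1" and c0: "0 < c" "c < 1" and k0: "0 < k" "k < 1" and s0: "0 < s"
    and reg: "c * (k + s) > 1" and xd: "x = (1 - c^2) / (2 * (1 - c*k))"
    and H: "\<And>p q. p^2 + q^2 = 1 \<Longrightarrow> 2*L - (p*k - q*s)*t \<le> 4 - 4*c*p"
    and T: "\<bar>t\<bar> \<le> 2*L"
  shows "L/2 \<le> x"
proof -
  have ck: "c*k < 1" using c0 k0 by (metis less_le_not_le mult_less_cancel_left2 order_less_le_trans)
  have ck': "0 < 1 - c*k" using ck by simp
  have xe: "2 * x * (1 - c*k) = 1 - c^2" using xd ck' by (simp add: field_simps)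
  have pos: "(c - k)^2 + s^2 > 0" using s0 by (simp add: add_nonneg_pos)
  have "2 * (1 - x) * (1 - c*k) = (c - k)^2 + s^2"
    using xe ks by (simp add: algebra_simps power2_eq_square)
  then have x1: "1 - x > 0" using pos ck' by (smt (verit) mult_pos_pos zero_less_mult_iff)
  have cs: "c*s > 1 - c*k" using reg by (simp add: algebra_simps)
  have "(c*s)^2 \<ge> (1 - c*k)^2" using cs ck' by (intro power_mono) auto
  moreover have "(c*s)^2 = c^2 * (1 - k^2)" proof -
    have "s^2 = 1 - k^2" using ks by simp
    then show ?thesis by (simp add: power_mult_distrib)
  qed
  ultimately have "c^2 * (1 - k^2) \<ge> 1 - 2*c*k + c^2*k^2"
    by (simp add: power2_eq_square algebra_simps)
  then have "2*c*k*(1 - c*k) \<ge> 1 - c^2" by (simp add: power2_eq_square algebra_simps)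
  then have "x \<le> c*k" unfolding xd using ck' by (simp add: pos_divide_le_eq algebra_simps)
  then have mx: "c*k - x \<ge> 0" by simp
  define p where "p = (c - x*k) / (1 - x)"
  define q where "q = x * s / (1 - x)"
  have pq: "p^2 + q^2 = 1"
  proof -
    have "(c - x*k)^2 + (x*s)^2 = (1 - x)^2"
    proof -
      have "(c - x*k)^2 + (x*s)^2 = c^2 - 2*c*x*k + x^2 * (k^2 + s^2)" by (simp add: power2_eq_square algebra_simps)
      also have "\<dots> = c^2 - 2*c*x*k + x^2" using ks by simp
      also have "\<dots> = (1-x)^2" using xe by (simp add: power2_eq_square algebra_simps)
      finally show ?thesis .
    qed
    then show ?thesis using x1 by (simp add: p_def q_def power_divide field_simps)
  qed
  have m: "p*k - q*s = (c*k - x) / (1 - x)"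
  proof -
    have "p*k - q*s = ((c - x*k)*k - x*s*s)/(1-x)" unfolding p_def q_def by (simp add: diff_divide_distrib left_diff_distrib mult.assoc)
    also have "(c - x*k)*k - x*s*s = c*k - x*(k^2+s^2)" by (simp add: algebra_simps power2_eq_square)
    finally show ?thesis using ks by simp
  qed
  from H[OF pq] m have h: "2*L - (c*k - x)/(1-x)*t \<le> 4 - 4*c*p" by simp
  then have hh: "(2*L - (c*k - x)/(1-x)*t) * (1 - x) \<le> (4 - 4*c*p) * (1-x)"
    using x1 by (simp add: mult_right_mono)
  have h2: "2*L*(1-x) - (c*k - x)*t \<le> 4*(1-x) - 4*c*(c - x*k)"
  proof -
    have e0: "(c*k - x)/(1-x) * (1-x) = c*k - x" using x1 by simp
    have e1': "(2*L - m'*t)*(1-x) = 2*L*(1-x) - (m'*(1-x))*t" for m' :: real by (simp add: algebra_simps)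
    have e1: "(2*L - (c*k - x)/(1-x)*t) * (1 - x) = 2*L*(1-x) - (c*k - x)*t"
      using e1'[of "(c*k - x)/(1-x)"] unfolding e0 .
    have e2: "(4 - 4*c*p) * (1-x) = 4*(1-x) - 4*c*(c - x*k)"
      using x1 by (simp add: p_def left_diff_distrib)
    show ?thesis using hh e1 e2 by simp
  qed
  have "(c*k - x)*t \<le> (c*k - x)*(2*L)" using mx T by (intro mult_left_mono) auto
  with h2 have "2*L*(1 - c*k) \<le> 4*(1-x) - 4*c*(c - x*k)" by (simp add: algebra_simps)
  also have "4*(1-x) - 4*c*(c - x*k) = 4*x*(1-c*k)" using xe by (simp add: algebra_simps power2_eq_square)
  finally have "2*L*(1 - c*k) \<le> 4*x*(1-c*k)" .
  then have "2*L \<le> 4*x" using ck' by (simp add: mult_le_cancel_right)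
  then show ?thesis by simp
qed

lemma norm_alg:
  fixes \<omega> r z0 z1 C :: complex
  assumes h1: "cnj \<omega> * \<omega> = 1" and h2: "\<omega>*\<omega> + cnj \<omega>*cnj \<omega> = 2*C" and h3: "r*r = 2" and h4: "cnj r = r"
  shows "cnj (z0*(cnj \<omega>/r) + z1*(\<omega>/r)) * (z0*(cnj \<omega>/r) + z1*(\<omega>/r)) + cnj (z0*(\<omega>/r) + z1*(cnj \<omega>/r)) * (z0*(\<omega>/r) + z1*(cnj \<omega>/r))
    = cnj z0*z0 + cnj z1*z1 + (cnj z0*z1 + cnj z1*z0)*C"
proof -
  have r: "r \<noteq> 0" using h3 by auto
  have "cnj (z0*(cnj \<omega>/r) + z1*(\<omega>/r)) * (z0*(cnj \<omega>/r) + z1*(\<omega>/r)) + cnj (z0*(\<omega>/r) + z1*(cnj \<omega>/r)) * (z0*(\<omega>/r) + z1*(cnj \<omega>/r))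
     = ((cnj z0*z0 + cnj z1*z1) * (2 * (cnj \<omega> * \<omega>)) + (cnj z0*z1 + cnj z1*z0) * (\<omega>*\<omega> + cnj \<omega>*cnj \<omega>)) / (r*r)"
    using r h4 by (simp add: field_simps)
  also have "\<dots> = cnj z0*z0 + cnj z1*z1 + (cnj z0*z1 + cnj z1*z0)*C"
    unfolding h1 h2 h3 by (simp add: field_simps)
  finally show ?thesis .
qed

lemma omega_facts:
  "cnj (cis t) * cis t = 1"
  "cis t * cis t + cnj (cis t) * cnj (cis t) = 2 * complex_of_real (cos (2*t))"
  "complex_of_real (sqrt 2) * complex_of_real (sqrt 2) = 2"
  "cnj (complex_of_real (sqrt 2)) = complex_of_real (sqrt 2)"
    apply (simp add: cc1)
   apply (simp add: cis_cnj cis_mult complex_eq_iff)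
  apply (simp flip: of_real_mult)
  apply simp
  done

lemma norm_psi:
  "cnj (z0 * psi_star n \<alpha> 0 0 + z1 * psi_star n \<alpha> 1 0) * (z0 * psi_star n \<alpha> 0 0 + z1 * psi_star n \<alpha> 1 0)
   + cnj (z0 * psi_star n \<alpha> 0 1 + z1 * psi_star n \<alpha> 1 1) * (z0 * psi_star n \<alpha> 0 1 + z1 * psi_star n \<alpha> 1 1)
   = cnj z0*z0 + cnj z1*z1 + (cnj z0*z1 + cnj z1*z0) * complex_of_real (cos (2 * (real n * \<alpha>)))"
  unfolding psi_vals using norm_alg[OF omega_facts] by simp

context
  fixes n :: nat and \<alpha> :: real and R l0 l1
  assumes R: "psd_on B3 R" and C: "cons_ok n \<alpha> R l0 l1"
    and I: "psd_on B2 (\<lambda>x y. ident_on B2 x y - ptrace2 R x y)"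
begin

lemma block_z:
  assumes b: "b \<in> qb"
  shows "Re (cnj z0*z0*l0 + cnj z0*z1*Bf R (tens (psi_star n \<alpha> 0) (Eb b)) (tens (psi_star n \<alpha> 1) (Eb b))
     + cnj z1*z0*cnj (Bf R (tens (psi_star n \<alpha> 0) (Eb b)) (tens (psi_star n \<alpha> 1) (Eb b))) + cnj z1*z1*l1)
   \<le> Re (cnj z0*z0 + cnj z1*z1 + (cnj z0*z1 + cnj z1*z0) * complex_of_real (cos (2 * (real n * \<alpha>))))"
proof -
  define T0 where "T0 = tens (psi_star n \<alpha> 0) (Eb b)"
  define T1 where "T1 = tens (psi_star n \<alpha> 1) (Eb b)"
  have t: "tens (\<lambda>a. z0 * psi_star n \<alpha> 0 a + z1 * psi_star n \<alpha> 1 a) (Eb b) = (\<lambda>x. z0 * T0 x + z1 * T1 x)"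
    by (auto simp: T0_def T1_def tens_def fun_eq_iff algebra_simps)
  have e: "Bf R (\<lambda>x. z0 * T0 x + z1 * T1 x) (\<lambda>x. z0 * T0 x + z1 * T1 x)
     = cnj z0*z0*Bf R T0 T0 + cnj z0*z1*Bf R T0 T1 + cnj z1*z0*Bf R T1 T0 + cnj z1*z1*Bf R T1 T1"
    unfolding Bf_addL Bf_addR Bf_smultL Bf_smultR by (simp add: algebra_simps)
  have d0: "Bf R T0 T0 = l0" unfolding T0_def using coef_diag[OF R C b, of 0] by (simp add: qb_def)
  have d1: "Bf R T1 T1 = l1" unfolding T1_def using coef_diag[OF R C b, of 1] by (simp add: qb_def)
  have h: "Bf R T1 T0 = cnj (Bf R T0 T1)" by (rule Bf_herm[OF R])
  have bl: "Bf R (tens (\<lambda>a. z0 * psi_star n \<alpha> 0 a + z1 * psi_star n \<alpha> 1 a) (Eb b)) (tens (\<lambda>a. z0 * psi_star n \<alpha> 0 a + z1 * psi_star n \<alpha> 1 a) (Eb b))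
     = cnj z0*z0*l0 + cnj z0*z1*Bf R T0 T1 + cnj z1*z0*cnj (Bf R T0 T1) + cnj z1*z1*l1"
    unfolding t e d0 d1 h by simp
  show ?thesis
    using block[OF R I b, of "\<lambda>a. z0 * psi_star n \<alpha> 0 a + z1 * psi_star n \<alpha> 1 a"]
    unfolding bl norm_psi T0_def[symmetric] T1_def[symmetric] .
qed

lemma diagX: "Bf R (XX n \<alpha> 0) (XX n \<alpha> 0) = 4 * l0" "Bf R (XX n \<alpha> 1) (XX n \<alpha> 1) = 4 * l1"
  using Bf_cons[OF C, of 0] Bf_cons[OF C, of 1] unorm[of 0 \<alpha>] unorm[of 1 \<alpha>] by (auto simp: qb_def)

lemma tau_bound: "\<bar>Re (Bf R (XX n \<alpha> 0) (XX n \<alpha> 1))\<bar> \<le> 2 * (l0 + l1)"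
proof -
  define \<tau> where "\<tau> = Bf R (XX n \<alpha> 0) (XX n \<alpha> 1)"
  have h: "Bf R (XX n \<alpha> 1) (XX n \<alpha> 0) = cnj \<tau>" unfolding \<tau>_def by (rule Bf_herm[OF R])
  have p: "Bf R (\<lambda>x. XX n \<alpha> 0 x + XX n \<alpha> 1 x) (\<lambda>x. XX n \<alpha> 0 x + XX n \<alpha> 1 x) = 4*l0 + 4*l1 + \<tau> + cnj \<tau>"
    unfolding Bf_addL Bf_addR diagX h \<tau>_def[symmetric] by simp
  have m: "Bf R (\<lambda>x. XX n \<alpha> 0 x + (-1) * XX n \<alpha> 1 x) (\<lambda>x. XX n \<alpha> 0 x + (-1) * XX n \<alpha> 1 x) = 4*l0 + 4*l1 - \<tau> - cnj \<tau>"
    unfolding Bf_addL Bf_addR Bf_smultL Bf_smultR diagX h \<tau>_def[symmetric] by simp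
  have "Re (4*l0 + 4*l1 + \<tau> + cnj \<tau>) \<ge> 0"
    using psd_Bf[OF R, of "\<lambda>x. XX n \<alpha> 0 x + XX n \<alpha> 1 x"] unfolding p by blast
  moreover have "Re (4*l0 + 4*l1 - \<tau> - cnj \<tau>) \<ge> 0"
    using psd_Bf[OF R, of "\<lambda>x. XX n \<alpha> 0 x + (-1) * XX n \<alpha> 1 x"] unfolding m by blast
  ultimately
  show ?thesis unfolding \<tau>_def[symmetric] by simp
qed


lemma sum_helper:
  fixes a x y c p m t :: real
  assumes "a - x/2 \<le> 2 - 2*c*p" "a - y/2 \<le> 2 - 2*c*p" "x + y = 2*(m*t)"
  shows "2*a - m*t \<le> 4 - 4*c*p"
proof -
  have e: "2*c*p = 2*(c*p)" "4*c*p = 4*(c*p)" by simp_all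
  have "2*a - (x+y)/2 \<le> 4 - 4*(c*p)" using assms(1,2) unfolding e by (simp add: field_simps)
  then show ?thesis unfolding e assms(3) by simp
qed

lemma cc3: "cis a * cis a = cis (2*a)" by (metis cis_mult mult_2)
lemma cc4: "cnj (cis a) * cnj (cis a) = cis (-(2*a))" by (metis cis_mult cis_cnj mult_2 minus_add_distrib)

lemma blocks_sum:
  assumes w: "cnj w * w = 1"
  shows "2*(l0+l1) - Re (w * cis (2*\<alpha>)) * Re (Bf R (XX n \<alpha> 0) (XX n \<alpha> 1)) \<le> 4 - 4*cos (2 * (real n * \<alpha>)) * Re w"
proof -
  define \<tau> where "\<tau> = Bf R (XX n \<alpha> 0) (XX n \<alpha> 1)"
  have o0: "Bf R (tens (psi_star n \<alpha> 0) (Eb 0)) (tens (psi_star n \<alpha> 1) (Eb 0)) = cis (2*\<alpha>) / 4 * \<tau>"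
    using coef_off[OF R C, of 0] unfolding \<tau>_def[symmetric] by (simp add: qb_def u_vals u_vals' cc3 mult.commute)
  have o1: "Bf R (tens (psi_star n \<alpha> 0) (Eb 1)) (tens (psi_star n \<alpha> 1) (Eb 1)) = cis (-(2*\<alpha>)) / 4 * \<tau>"
    using coef_off[OF R C, of 1] unfolding \<tau>_def[symmetric] by (simp add: qb_def u_vals u_vals' cc4 mult.commute)
  have q0: "0 \<in> qb" "1 \<in> qb" by (simp_all add: qb_def)
  have w1: "cnj (-w) * (-w) = 1" using w by simp
  have w2: "cnj (- cnj w) * (- cnj w) = 1" using w by (simp add: mult.commute)
  have h0: "Re (cnj 1*1*l0 + cnj 1*(-w)*(cis (2*\<alpha>) / 4 * \<tau>) + cnj (-w)*1*cnj (cis (2*\<alpha>) / 4 * \<tau>) + 1*complex_of_real l1)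
      \<le> Re (cnj 1*1 + 1 + (cnj 1*(-w) + cnj (-w)*1) * complex_of_real (cos (2 * (real n * \<alpha>))))"
    using block_z[OF q0(1), of 1 "-w"] unfolding o0 w1 .
  have h1: "Re (cnj 1*1*l0 + cnj 1*(-cnj w)*(cis (-(2*\<alpha>)) / 4 * \<tau>) + cnj (-cnj w)*1*cnj (cis (-(2*\<alpha>)) / 4 * \<tau>) + 1*complex_of_real l1)
      \<le> Re (cnj 1*1 + 1 + (cnj 1*(-cnj w) + cnj (-cnj w)*1) * complex_of_real (cos (2 * (real n * \<alpha>))))"
    using block_z[OF q0(2), of 1 "-cnj w"] unfolding o1 w2 .
  define e where "e = cis (2*\<alpha>)"
  define c where "c = complex_of_real (cos (2 * (real n * \<alpha>)))"
  have ce: "cis (-(2*\<alpha>)) = cnj e" unfolding e_def by (simp add: cis_cnj)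
  have L0: "cnj 1*1*complex_of_real l0 + cnj 1*(-w)*(e / 4 * \<tau>) + cnj (-w)*1*cnj (e / 4 * \<tau>) + 1*complex_of_real l1
     = complex_of_real (l0+l1) - ((w*e*\<tau>) + cnj (w*e*\<tau>))/4" by (simp add: algebra_simps)
  have L1: "cnj 1*1*complex_of_real l0 + cnj 1*(-cnj w)*(cnj e / 4 * \<tau>) + cnj (-cnj w)*1*cnj (cnj e / 4 * \<tau>) + 1*complex_of_real l1
     = complex_of_real (l0+l1) - ((cnj w*cnj e*\<tau>) + cnj (cnj w*cnj e*\<tau>))/4" by (simp add: algebra_simps)
  have R0: "cnj 1*1 + 1 + (cnj 1*(-w) + cnj (-w)*1) * c = 2 - (w + cnj w) * c" by (simp add: algebra_simps)
  have R1: "cnj 1*1 + 1 + (cnj 1*(-cnj w) + cnj (-cnj w)*1) * c = 2 - (w + cnj w) * c" by (simp add: algebra_simps)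
  have RE1: "Re (complex_of_real (l0 + l1) - complex_of_real (2 * Re X) / 4) = l0 + l1 - Re X / 2" for X by simp
  have RE2: "Re (2 - complex_of_real (2 * Re w) * c) = 2 - 2*cos (2 * (real n * \<alpha>)) * Re w" by (simp add: c_def)
  have r0: "l0 + l1 - Re (w*e*\<tau>)/2 \<le> 2 - 2*cos (2 * (real n * \<alpha>)) * Re w"
    using h0 unfolding e_def[symmetric] c_def[symmetric] L0 R0 unfolding complex_add_cnj RE1 RE2 by simp
  have r1: "l0 + l1 - Re (cnj w*cnj e*\<tau>)/2 \<le> 2 - 2*cos (2 * (real n * \<alpha>)) * Re w"
    using h1 unfolding ce e_def[symmetric] c_def[symmetric] L1 R1 unfolding complex_add_cnj RE1 RE2 by simp
  have s: "Re (w*e*\<tau>) + Re (cnj w*cnj e*\<tau>) = 2 * (Re (w*e) * Re \<tau>)"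
  proof -
    have "w*e*\<tau> + cnj w*cnj e*\<tau> = (w*e + cnj (w*e)) * \<tau>" by (simp add: algebra_simps)
    also have "\<dots> = complex_of_real (2 * Re (w*e)) * \<tau>" by (simp only: complex_add_cnj)
    finally have "Re (w*e*\<tau> + cnj w*cnj e*\<tau>) = Re (complex_of_real (2 * Re (w*e)) * \<tau>)" by simp
    then show ?thesis by simp
  qed
  show ?thesis using sum_helper[OF r0 r1 s] unfolding \<tau>_def[symmetric] e_def[symmetric] .
qed

end

lemma quad_form:
  "(\<Sum>x\<in>A. \<Sum>y\<in>A. cnj (v x) * (\<Sum>p\<in>qb. \<Sum>q\<in>qb. h p q * F p x * cnj (F q y)) * v y)
   = (\<Sum>p\<in>qb. \<Sum>q\<in>qb. h p q * cnj (\<Sum>x\<in>A. cnj (F p x) * v x) * (\<Sum>y\<in>A. cnj (F q y) * v y))"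
  unfolding sum_qb
  by (simp add: sum_distrib_left sum_distrib_right sum.distrib algebra_simps)

lemma psd2:
  fixes P :: real and q z0 z1 :: complex
  assumes "cmod q \<le> P"
  shows "Re (P * (cnj z0 * z0) + P * (cnj z1 * z1) + cnj z0 * q * z1 + cnj z1 * cnj q * z0) \<ge> 0"
    and "P * (cnj z0 * z0) + P * (cnj z1 * z1) + cnj z0 * q * z1 + cnj z1 * cnj q * z0 \<in> \<real>"
proof -
  have e: "cnj z1 * cnj q * z0 = cnj (cnj z0 * q * z1)" by simp
  have r1: "Re (cnj z0 * q * z1) \<ge> - (cmod z0 * cmod q * cmod z1)"
    using abs_Re_le_cmod[of "cnj z0 * q * z1"] by (simp add: norm_mult)
  have n0: "Re (cnj z0 * z0) = (cmod z0)^2" unfolding cmod_power2 by (simp add: power2_eq_square)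
  have n1: "Re (cnj z1 * z1) = (cmod z1)^2" unfolding cmod_power2 by (simp add: power2_eq_square)
  have "cmod z0 * cmod q * cmod z1 \<le> cmod z0 * P * cmod z1"
    using assms by (intro mult_right_mono mult_left_mono) auto
  moreover have "P * (cmod z0)^2 + P * (cmod z1)^2 - 2 * (cmod z0 * P * cmod z1) = P * (cmod z0 - cmod z1)^2"
    by (simp add: power2_eq_square algebra_simps)
  moreover have "P * (cmod z0 - cmod z1)^2 \<ge> 0" using assms norm_ge_zero[of q] by (intro mult_nonneg_nonneg) (linarith, simp)
  moreover have eq: "Re (complex_of_real P * Z0 + complex_of_real P * Z1 + X + cnj X) = P * Re Z0 + P * Re Z1 + 2 * Re X" for X Z0 Z1 by simp
  ultimately show "Re (P * (cnj z0 * z0) + P * (cnj z1 * z1) + cnj z0 * q * z1 + cnj z1 * cnj q * z0) \<ge> 0"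
    unfolding e eq n0 n1 using r1 by linarith
  show "P * (cnj z0 * z0) + P * (cnj z1 * z1) + cnj z0 * q * z1 + cnj z1 * cnj q * z0 \<in> \<real>"
  proof -
    have "Im (complex_of_real P * (cnj z0*z0) + complex_of_real P*(cnj z1*z1) + X + cnj X) = 0" for X by simp
    then show ?thesis unfolding e complex_is_Real_iff .
  qed
qed


lemma dual_alg:
  fixes w r S :: complex
  assumes h1: "cnj w * w = 1" and h2: "w*w - cnj w * cnj w = 2*\<i>*S" and h3: "r*r = 2" and h4: "cnj r = r"
    and h5: "cnj S = S" and h6: "S \<noteq> 0"
  shows "cnj (cnj w / r) * (w / (r*\<i>*S)) + cnj (w / r) * (- cnj w / (r*\<i>*S)) = 1"
    and "cnj (cnj w / r) * (- cnj w / (r*\<i>*S)) + cnj (w / r) * (w / (r*\<i>*S)) = 0"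
    and "cnj (w / r) * (w / (r*\<i>*S)) + cnj (cnj w / r) * (- cnj w / (r*\<i>*S)) = 0"
    and "cnj (w / r) * (- cnj w / (r*\<i>*S)) + cnj (cnj w / r) * (w / (r*\<i>*S)) = 1"
    and "cnj w / r * cnj (w / (r*\<i>*S)) + w / r * cnj (- cnj w / (r*\<i>*S)) = 1"
    and "cnj w / r * cnj (- cnj w / (r*\<i>*S)) + w / r * cnj (w / (r*\<i>*S)) = 0"
    and "w / r * cnj (w / (r*\<i>*S)) + cnj w / r * cnj (- cnj w / (r*\<i>*S)) = 0"
    and "w / r * cnj (- cnj w / (r*\<i>*S)) + cnj w / r * cnj (w / (r*\<i>*S)) = 1"
proof -
  have r: "r \<noteq> 0" using h3 by auto
  have c1: "w * cnj w = 1" using h1 by (simp add: mult.commute)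
  have k: "(w*w - cnj w * cnj w) / (r*r*\<i>*S) = 1" unfolding h2 h3 using h6 by simp
  show "cnj (cnj w / r) * (w / (r*\<i>*S)) + cnj (w / r) * (- cnj w / (r*\<i>*S)) = 1"
    using k r h6 h4 by (simp add: field_simps)
  show "cnj (cnj w / r) * (- cnj w / (r*\<i>*S)) + cnj (w / r) * (w / (r*\<i>*S)) = 0"
    using r h6 h4 by (simp add: field_simps)
  show "cnj (w / r) * (w / (r*\<i>*S)) + cnj (cnj w / r) * (- cnj w / (r*\<i>*S)) = 0"
    using r h6 h4 by (simp add: field_simps)
  show "cnj (w / r) * (- cnj w / (r*\<i>*S)) + cnj (cnj w / r) * (w / (r*\<i>*S)) = 1"
    using k r h6 h4 by (simp add: field_simps)
  show "cnj w / r * cnj (w / (r*\<i>*S)) + w / r * cnj (- cnj w / (r*\<i>*S)) = 1"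
    using k r h6 h4 h5 by (simp add: field_simps)
  show "cnj w / r * cnj (- cnj w / (r*\<i>*S)) + w / r * cnj (w / (r*\<i>*S)) = 0"
    using r h6 h4 h5 by (simp add: field_simps)
  show "w / r * cnj (w / (r*\<i>*S)) + cnj w / r * cnj (- cnj w / (r*\<i>*S)) = 0"
    using r h6 h4 h5 by (simp add: field_simps)
  show "w / r * cnj (- cnj w / (r*\<i>*S)) + cnj w / r * cnj (w / (r*\<i>*S)) = 1"
    using k r h6 h4 h5 by (simp add: field_simps)
qed


definition fv :: "nat \<Rightarrow> real \<Rightarrow> nat \<Rightarrow> nat \<Rightarrow> complex" where
  "fv n \<alpha> p a = (if p = 0 then (if a = 0 then cis (real n * \<alpha>) else - cnj (cis (real n * \<alpha>)))
     else (if a = 0 then - cnj (cis (real n * \<alpha>)) else cis (real n * \<alpha>)))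
     / (complex_of_real (sqrt 2) * \<i> * complex_of_real (sin (2 * (real n * \<alpha>))))"

lemma fv_vals:
  "fv n \<alpha> 0 0 = cis (real n * \<alpha>) / (complex_of_real (sqrt 2) * \<i> * complex_of_real (sin (2 * (real n * \<alpha>))))"
  "fv n \<alpha> 0 1 = - cnj (cis (real n * \<alpha>)) / (complex_of_real (sqrt 2) * \<i> * complex_of_real (sin (2 * (real n * \<alpha>))))"
  "fv n \<alpha> 1 0 = - cnj (cis (real n * \<alpha>)) / (complex_of_real (sqrt 2) * \<i> * complex_of_real (sin (2 * (real n * \<alpha>))))"
  "fv n \<alpha> 1 1 = cis (real n * \<alpha>) / (complex_of_real (sqrt 2) * \<i> * complex_of_real (sin (2 * (real n * \<alpha>))))"
  by (simp_all add: fv_def)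

lemma om_h2: "cis t * cis t - cnj (cis t) * cnj (cis t) = 2 * \<i> * complex_of_real (sin (2*t))"
  unfolding cc3 cc4 by (simp add: complex_eq_iff sin_double)

context
  fixes n :: nat and \<alpha> :: real
  assumes S: "sin (2 * (real n * \<alpha>)) \<noteq> 0"
begin

lemma h5: "cnj (complex_of_real (sin (2 * (real n * \<alpha>)))) = complex_of_real (sin (2 * (real n * \<alpha>)))" by simp
lemma h6: "complex_of_real (sin (2 * (real n * \<alpha>))) \<noteq> 0" using S by simp
lemmas DA = dual_alg[OF omega_facts(1) om_h2 omega_facts(3) omega_facts(4) h5 h6]

lemma D1: "cnj (psi_star n \<alpha> 0 0) * fv n \<alpha> 0 0 + cnj (psi_star n \<alpha> 0 1) * fv n \<alpha> 0 1 = 1"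
  "cnj (psi_star n \<alpha> 0 0) * fv n \<alpha> 1 0 + cnj (psi_star n \<alpha> 0 1) * fv n \<alpha> 1 1 = 0"
  "cnj (psi_star n \<alpha> 1 0) * fv n \<alpha> 0 0 + cnj (psi_star n \<alpha> 1 1) * fv n \<alpha> 0 1 = 0"
  "cnj (psi_star n \<alpha> 1 0) * fv n \<alpha> 1 0 + cnj (psi_star n \<alpha> 1 1) * fv n \<alpha> 1 1 = 1"
  unfolding psi_vals fv_vals using DA by simp_all

lemma D2: "psi_star n \<alpha> 0 0 * cnj (fv n \<alpha> 0 0) + psi_star n \<alpha> 1 0 * cnj (fv n \<alpha> 1 0) = 1"
  "psi_star n \<alpha> 0 0 * cnj (fv n \<alpha> 0 1) + psi_star n \<alpha> 1 0 * cnj (fv n \<alpha> 1 1) = 0"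
  "psi_star n \<alpha> 0 1 * cnj (fv n \<alpha> 0 0) + psi_star n \<alpha> 1 1 * cnj (fv n \<alpha> 1 0) = 0"
  "psi_star n \<alpha> 0 1 * cnj (fv n \<alpha> 0 1) + psi_star n \<alpha> 1 1 * cnj (fv n \<alpha> 1 1) = 1"
  unfolding psi_vals fv_vals using DA by simp_all

end


lemma pin_gen:
  "pinner0 \<phi> (\<lambda>X Y. \<Sum>p\<in>qb. \<Sum>q\<in>qb. h p q * tens (g p) (u p) X * cnj (tens (g q) (u q) Y)) (b,c) (b',c')
   = (\<Sum>p\<in>qb. \<Sum>q\<in>qb. h p q * (\<Sum>a\<in>qb. cnj (\<phi> a) * g p a) * cnj (\<Sum>a\<in>qb. cnj (\<phi> a) * g q a) * u p (b,c) * cnj (u q (b',c')))"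
  unfolding pinner0_def tens_def sum_qb by (simp add: algebra_simps)

lemma tr_gen:
  "(\<Sum>X\<in>B2. \<Sum>Y\<in>B2. cnj (w X) * ptrace2 (\<lambda>X Y. \<Sum>p\<in>qb. \<Sum>q\<in>qb. h p q * F p X * cnj (F q Y)) X Y * w Y)
   = (\<Sum>c\<in>qb. \<Sum>p\<in>qb. \<Sum>q\<in>qb. h p q * cnj (\<Sum>X\<in>B2. cnj (F p (fst X, snd X, c)) * w X) * (\<Sum>X\<in>B2. cnj (F q (fst X, snd X, c)) * w X))"
  unfolding ptrace2_def sum_B2 sum_qb by (simp add: algebra_simps)


definition Rp :: "nat \<Rightarrow> real \<Rightarrow> real \<Rightarrow> real \<Rightarrow> nat\<times>nat\<times>nat \<Rightarrow> nat\<times>nat\<times>nat \<Rightarrow> complex" where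
 "Rp n \<alpha> xx yy = (\<lambda>X Y. \<Sum>p\<in>qb. \<Sum>q\<in>qb. complex_of_real (if p = q then xx else yy) * tens (fv n \<alpha> p) (dket (Uop \<alpha> p)) X * cnj (tens (fv n \<alpha> q) (dket (Uop \<alpha> q)) Y))"

lemma Rp_psd:
  assumes "\<bar>yy\<bar> \<le> xx"
  shows "psd_on B3 (Rp n \<alpha> xx yy)"
  unfolding psd_on_def
proof
  fix v :: "nat\<times>nat\<times>nat \<Rightarrow> complex"
  define \<xi> where "\<xi> p = (\<Sum>X\<in>B3. cnj (tens (fv n \<alpha> p) (dket (Uop \<alpha> p)) X) * v X)" for p
  have e: "(\<Sum>X\<in>B3. \<Sum>Y\<in>B3. cnj (v X) * Rp n \<alpha> xx yy X Y * v Y)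
     = xx * (cnj (\<xi> 0) * \<xi> 0) + xx * (cnj (\<xi> 1) * \<xi> 1) + cnj (\<xi> 0) * complex_of_real yy * \<xi> 1 + cnj (\<xi> 1) * cnj (complex_of_real yy) * \<xi> 0"
    unfolding Rp_def unfolding quad_form unfolding \<xi>_def[symmetric] unfolding sum_qb by (simp add: algebra_simps)
  have c: "cmod (complex_of_real yy) \<le> xx" using assms by simp
  show "(\<Sum>X\<in>B3. \<Sum>Y\<in>B3. cnj (v X) * Rp n \<alpha> xx yy X Y * v Y) \<in> \<real> \<and>
        0 \<le> Re (\<Sum>X\<in>B3. \<Sum>Y\<in>B3. cnj (v X) * Rp n \<alpha> xx yy X Y * v Y)"
    unfolding e using psd2[OF c] by blast
qed

context
  fixes n :: nat and \<alpha> :: real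
  assumes S: "sin (2 * (real n * \<alpha>)) \<noteq> 0"
begin

lemma Rp_pin:
  assumes i: "i \<in> qb" and X: "X \<in> B2" and Y: "Y \<in> B2"
  shows "pinner0 (psi_star n \<alpha> i) (Rp n \<alpha> xx yy) X Y = complex_of_real (if i = 0 then xx else xx) * outer (dket (Uop \<alpha> i)) X Y"
proof -
  obtain b c b' c' where XY: "X = (b,c)" "Y = (b',c')" by (cases X, cases Y) auto
  have i0: "pinner0 (psi_star n \<alpha> 0) (Rp n \<alpha> xx yy) (b,c) (b',c') = complex_of_real xx * outer (dket (Uop \<alpha> 0)) (b,c) (b',c')"
    unfolding Rp_def unfolding pin_gen unfolding sum_qb unfolding D1[OF S] by (simp add: outer_def)
  have i1: "pinner0 (psi_star n \<alpha> 1) (Rp n \<alpha> xx yy) (b,c) (b',c') = complex_of_real xx * outer (dket (Uop \<alpha> 1)) (b,c) (b',c')"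
    unfolding Rp_def unfolding pin_gen unfolding sum_qb unfolding D1[OF S] by (simp add: outer_def)
  show ?thesis using i i0 i1 unfolding XY qb_def by auto
qed

lemma recon:
  "(cnj (fv n \<alpha> 0 0) * w0 + cnj (fv n \<alpha> 0 1) * w1) * psi_star n \<alpha> 0 0 + (cnj (fv n \<alpha> 1 0) * w0 + cnj (fv n \<alpha> 1 1) * w1) * psi_star n \<alpha> 1 0 = w0"
  "(cnj (fv n \<alpha> 0 0) * w0 + cnj (fv n \<alpha> 0 1) * w1) * psi_star n \<alpha> 0 1 + (cnj (fv n \<alpha> 1 0) * w0 + cnj (fv n \<alpha> 1 1) * w1) * psi_star n \<alpha> 1 1 = w1"
proof -
  have "(cnj (fv n \<alpha> 0 0) * w0 + cnj (fv n \<alpha> 0 1) * w1) * psi_star n \<alpha> 0 0 + (cnj (fv n \<alpha> 1 0) * w0 + cnj (fv n \<alpha> 1 1) * w1) * psi_star n \<alpha> 1 0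
    = w0 * (psi_star n \<alpha> 0 0 * cnj (fv n \<alpha> 0 0) + psi_star n \<alpha> 1 0 * cnj (fv n \<alpha> 1 0)) + w1 * (psi_star n \<alpha> 0 0 * cnj (fv n \<alpha> 0 1) + psi_star n \<alpha> 1 0 * cnj (fv n \<alpha> 1 1))"
    by (simp add: algebra_simps)
  then show "(cnj (fv n \<alpha> 0 0) * w0 + cnj (fv n \<alpha> 0 1) * w1) * psi_star n \<alpha> 0 0 + (cnj (fv n \<alpha> 1 0) * w0 + cnj (fv n \<alpha> 1 1) * w1) * psi_star n \<alpha> 1 0 = w0"
    unfolding D2[OF S] by simp
  have "(cnj (fv n \<alpha> 0 0) * w0 + cnj (fv n \<alpha> 0 1) * w1) * psi_star n \<alpha> 0 1 + (cnj (fv n \<alpha> 1 0) * w0 + cnj (fv n \<alpha> 1 1) * w1) * psi_star n \<alpha> 1 1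
    = w0 * (psi_star n \<alpha> 0 1 * cnj (fv n \<alpha> 0 0) + psi_star n \<alpha> 1 1 * cnj (fv n \<alpha> 1 0)) + w1 * (psi_star n \<alpha> 0 1 * cnj (fv n \<alpha> 0 1) + psi_star n \<alpha> 1 1 * cnj (fv n \<alpha> 1 1))"
    by (simp add: algebra_simps)
  then show "(cnj (fv n \<alpha> 0 0) * w0 + cnj (fv n \<alpha> 0 1) * w1) * psi_star n \<alpha> 0 1 + (cnj (fv n \<alpha> 1 0) * w0 + cnj (fv n \<alpha> 1 1) * w1) * psi_star n \<alpha> 1 1 = w1"
    unfolding D2[OF S] by simp
qed

lemma normw:
  "cnj w0 * w0 + cnj w1 * w1 = cnj (cnj (fv n \<alpha> 0 0) * w0 + cnj (fv n \<alpha> 0 1) * w1) * (cnj (fv n \<alpha> 0 0) * w0 + cnj (fv n \<alpha> 0 1) * w1)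
    + cnj (cnj (fv n \<alpha> 1 0) * w0 + cnj (fv n \<alpha> 1 1) * w1) * (cnj (fv n \<alpha> 1 0) * w0 + cnj (fv n \<alpha> 1 1) * w1)
    + (cnj (cnj (fv n \<alpha> 0 0) * w0 + cnj (fv n \<alpha> 0 1) * w1) * (cnj (fv n \<alpha> 1 0) * w0 + cnj (fv n \<alpha> 1 1) * w1)
       + cnj (cnj (fv n \<alpha> 1 0) * w0 + cnj (fv n \<alpha> 1 1) * w1) * (cnj (fv n \<alpha> 0 0) * w0 + cnj (fv n \<alpha> 0 1) * w1))
      * complex_of_real (cos (2 * (real n * \<alpha>)))"
  using norm_psi[of "cnj (fv n \<alpha> 0 0) * w0 + cnj (fv n \<alpha> 0 1) * w1" n \<alpha> "cnj (fv n \<alpha> 1 0) * w0 + cnj (fv n \<alpha> 1 1) * w1"]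
  unfolding recon by simp


lemma eta:
  assumes "c \<in> qb" "p \<in> qb"
  shows "(\<Sum>X\<in>B2. cnj (tens (fv n \<alpha> p) (dket (Uop \<alpha> p)) (fst X, snd X, c)) * w X)
    = cnj (dket (Uop \<alpha> p) (c,c)) * (cnj (fv n \<alpha> p 0) * w (0,c) + cnj (fv n \<alpha> p 1) * w (1,c))"
  using assms unfolding qb_eq
  by (auto simp: sum_B2 tens_def u_vals u_vals' algebra_simps)

end

lemma blockalg:
  fixes U0 U1 z0 z1 C :: complex and xx yy :: real
  assumes u0: "cnj U0 * U0 = 1" and u1: "cnj U1 * U1 = 1" and cc: "cnj C = C"
  shows "(cnj z0 * z0 + cnj z1 * z1 + (cnj z0 * z1 + cnj z1 * z0) * C)
     - (xx * (cnj (cnj U0 * z0) * (cnj U0 * z0)) + yy * (cnj (cnj U0 * z0) * (cnj U1 * z1))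
       + (yy * (cnj (cnj U1 * z1) * (cnj U0 * z0)) + xx * (cnj (cnj U1 * z1) * (cnj U1 * z1))))
   = complex_of_real (1-xx) * (cnj z0 * z0) + complex_of_real (1-xx) * (cnj z1 * z1) + cnj z0 * (C - yy*(U0*cnj U1)) * z1 + cnj z1 * cnj (C - yy*(U0*cnj U1)) * z0"
proof -
  have a: "cnj (cnj U0 * z0) * (cnj U0 * z0) = (cnj U0 * U0) * (cnj z0 * z0)" by (simp add: algebra_simps)
  have b: "cnj (cnj U1 * z1) * (cnj U1 * z1) = (cnj U1 * U1) * (cnj z1 * z1)" by (simp add: algebra_simps)
  have c2: "cnj (C - yy*(U0*cnj U1)) = C - yy*(U1*cnj U0)" using cc by simp
  have d0: "cnj (cnj U0 * z0) = U0 * cnj z0" by simp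
  have d1: "cnj (cnj U1 * z1) = U1 * cnj z1" by simp
  show ?thesis unfolding a b u0 u1 unfolding c2 d0 d1 by (simp add: algebra_simps)
qed


context
  fixes n :: nat and \<alpha> :: real
  assumes S: "sin (2 * (real n * \<alpha>)) \<noteq> 0"
begin

lemma percol:
  fixes xx yy :: real and w :: "nat\<times>nat \<Rightarrow> complex"
  assumes c: "c \<in> qb"
    and Q: "cmod (complex_of_real (cos (2 * (real n * \<alpha>))) - yy * cis (2*\<alpha>)) \<le> 1 - xx"
  defines "E \<equiv> \<lambda>p. cnj (dket (Uop \<alpha> p) (c,c)) * (cnj (fv n \<alpha> p 0) * w (0,c) + cnj (fv n \<alpha> p 1) * w (1,c))"
  shows "(cnj (w (0,c)) * w (0,c) + cnj (w (1,c)) * w (1,c))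
     - (xx * (cnj (E 0) * E 0) + yy * (cnj (E 0) * E 1) + (yy * (cnj (E 1) * E 0) + xx * (cnj (E 1) * E 1))) \<in> \<real>
    \<and> 0 \<le> Re ((cnj (w (0,c)) * w (0,c) + cnj (w (1,c)) * w (1,c))
     - (xx * (cnj (E 0) * E 0) + yy * (cnj (E 0) * E 1) + (yy * (cnj (E 1) * E 0) + xx * (cnj (E 1) * E 1))))"
proof -
  define U0 where "U0 = dket (Uop \<alpha> 0) (c,c)"
  define U1 where "U1 = dket (Uop \<alpha> 1) (c,c)"
  define z0 where "z0 = cnj (fv n \<alpha> 0 0) * w (0,c) + cnj (fv n \<alpha> 0 1) * w (1,c)"
  define z1 where "z1 = cnj (fv n \<alpha> 1 0) * w (0,c) + cnj (fv n \<alpha> 1 1) * w (1,c)"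
  define C where "C = complex_of_real (cos (2 * (real n * \<alpha>)))"
  have E0: "E 0 = cnj U0 * z0" and E1: "E 1 = cnj U1 * z1" unfolding E_def U0_def U1_def z0_def z1_def by simp_all
  have u0: "cnj U0 * U0 = 1" and u1: "cnj U1 * U1 = 1" using c unfolding U0_def U1_def qb_eq
    by (auto simp: u_vals u_vals' cc1 cc2)
  have cc: "cnj C = C" unfolding C_def by simp
  have nw: "cnj (w (0,c)) * w (0,c) + cnj (w (1,c)) * w (1,c) = cnj z0 * z0 + cnj z1 * z1 + (cnj z0 * z1 + cnj z1 * z0) * C"
    unfolding z0_def z1_def C_def by (rule normw[OF S])
  have qq: "cmod (C - yy*(U0*cnj U1)) \<le> 1 - xx"
  proof -
    have "U0 * cnj U1 = cis (2*\<alpha>) \<or> U0 * cnj U1 = cis (-(2*\<alpha>))"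
      using c unfolding U0_def U1_def qb_eq by (auto simp: u_vals u_vals' cis_cnj cis_mult mult_2[symmetric])
    moreover have "cmod (C - yy * cis (-(2*\<alpha>))) = cmod (C - yy * cis (2*\<alpha>))"
    proof -
      have "C - yy * cis (-(2*\<alpha>)) = cnj (C - yy * cis (2*\<alpha>))" using cc by (simp add: cis_cnj)
      then show ?thesis by (simp only: complex_mod_cnj)
    qed
    ultimately show ?thesis using Q unfolding C_def by auto
  qed
  show ?thesis
    unfolding nw E0 E1 blockalg[OF u0 u1 cc] using psd2[OF qq] by blast
qed

lemma Rp_tr:
  fixes xx yy :: real
  assumes Q: "cmod (complex_of_real (cos (2 * (real n * \<alpha>))) - yy * cis (2*\<alpha>)) \<le> 1 - xx"
  shows "psd_on B2 (\<lambda>X Y. ident_on B2 X Y - ptrace2 (Rp n \<alpha> xx yy) X Y)"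
  unfolding psd_on_def
proof
  fix w :: "nat\<times>nat \<Rightarrow> complex"
  define E where "E p c = cnj (dket (Uop \<alpha> p) (c,c)) * (cnj (fv n \<alpha> p 0) * w (0,c) + cnj (fv n \<alpha> p 1) * w (1,c))" for p c
  define T where "T c = (cnj (w (0,c)) * w (0,c) + cnj (w (1,c)) * w (1,c))
     - (xx * (cnj (E 0 c) * E 0 c) + yy * (cnj (E 0 c) * E 1 c) + (yy * (cnj (E 1 c) * E 0 c) + xx * (cnj (E 1 c) * E 1 c)))" for c
  have q1: "(\<Sum>X\<in>B2. \<Sum>Y\<in>B2. cnj (w X) * (ident_on B2 X Y - ptrace2 (Rp n \<alpha> xx yy) X Y) * w Y)
     = (\<Sum>X\<in>B2. \<Sum>Y\<in>B2. cnj (w X) * ident_on B2 X Y * w Y) - (\<Sum>X\<in>B2. \<Sum>Y\<in>B2. cnj (w X) * ptrace2 (Rp n \<alpha> xx yy) X Y * w Y)"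
    by (simp add: right_diff_distrib left_diff_distrib sum_subtractf)
  have q2: "(\<Sum>X\<in>B2. \<Sum>Y\<in>B2. cnj (w X) * ident_on B2 X Y * w Y)
     = (cnj (w (0,0)) * w (0,0) + cnj (w (1,0)) * w (1,0)) + (cnj (w (0,1)) * w (0,1) + cnj (w (1,1)) * w (1,1))"
    by (simp add: sum_B2 ident_on_def B2_eq)
  have q3: "(\<Sum>X\<in>B2. \<Sum>Y\<in>B2. cnj (w X) * ptrace2 (Rp n \<alpha> xx yy) X Y * w Y)
     = (xx * (cnj (E 0 0) * E 0 0) + yy * (cnj (E 0 0) * E 1 0) + (yy * (cnj (E 1 0) * E 0 0) + xx * (cnj (E 1 0) * E 1 0)))
     + (xx * (cnj (E 0 1) * E 0 1) + yy * (cnj (E 0 1) * E 1 1) + (yy * (cnj (E 1 1) * E 0 1) + xx * (cnj (E 1 1) * E 1 1)))"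
  proof -
    have z: "0 \<in> qb" "1 \<in> qb" by (simp_all add: qb_def)
    show ?thesis
      unfolding Rp_def unfolding tr_gen unfolding sum_qb
      unfolding eta[OF S z(1) z(1)] eta[OF S z(1) z(2)] eta[OF S z(2) z(1)] eta[OF S z(2) z(2)]
      unfolding E_def[symmetric] by (simp add: algebra_simps)
  qed
  have tot: "(\<Sum>X\<in>B2. \<Sum>Y\<in>B2. cnj (w X) * (ident_on B2 X Y - ptrace2 (Rp n \<alpha> xx yy) X Y) * w Y) = T 0 + T 1"
    unfolding q1 q2 q3 T_def by (simp add: algebra_simps)
  have t0: "T 0 \<in> \<real> \<and> 0 \<le> Re (T 0)" unfolding T_def E_def using percol[of 0 yy xx w] Q by (simp add: qb_def)
  have t1: "T 1 \<in> \<real> \<and> 0 \<le> Re (T 1)" unfolding T_def E_def using percol[of 1 yy xx w] Q by (simp add: qb_def)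
  show "(\<Sum>X\<in>B2. \<Sum>Y\<in>B2. cnj (w X) * (ident_on B2 X Y - ptrace2 (Rp n \<alpha> xx yy) X Y) * w Y) \<in> \<real> \<and>
        0 \<le> Re (\<Sum>X\<in>B2. \<Sum>Y\<in>B2. cnj (w X) * (ident_on B2 X Y - ptrace2 (Rp n \<alpha> xx yy) X Y) * w Y)"
    unfolding tot using t0 t1 by auto
qed

end

lemma primal:
  fixes xx yy :: real
  assumes S: "sin (2 * (real n * \<alpha>)) \<noteq> 0" and y: "\<bar>yy\<bar> \<le> xx"
    and Q: "cmod (complex_of_real (cos (2 * (real n * \<alpha>))) - yy * cis (2*\<alpha>)) \<le> 1 - xx"
  shows "\<exists>R. PP_feasible n \<alpha> R \<and> PP_objective n \<alpha> R = xx"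
proof (intro exI conjI)
  have x0: "xx \<ge> 0" using y by simp
  have C: "cons_ok n \<alpha> (Rp n \<alpha> xx yy) xx xx"
    unfolding cons_ok_def using Rp_pin[OF S] by simp
  show "PP_feasible n \<alpha> (Rp n \<alpha> xx yy)"
    unfolding PP_feasible_def using Rp_psd[OF y] Rp_tr[OF S Q] C x0 unfolding cons_ok_def by blast
  show "PP_objective n \<alpha> (Rp n \<alpha> xx yy) = xx" using objective[OF C] by simp
qed

lemma upper:
  assumes F: "PP_feasible n \<alpha> R"
  shows "\<And>w. cnj w * w = 1 \<Longrightarrow> 4 * PP_objective n \<alpha> R - Re (w * cis (2*\<alpha>)) * Re (Bf R (XX n \<alpha> 0) (XX n \<alpha> 1)) \<le> 4 - 4*cos (2 * (real n * \<alpha>)) * Re w"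
    and "\<bar>Re (Bf R (XX n \<alpha> 0) (XX n \<alpha> 1))\<bar> \<le> 4 * PP_objective n \<alpha> R"
proof -
  obtain l0 l1 where R: "psd_on B3 R" and I: "psd_on B2 (\<lambda>x y. ident_on B2 x y - ptrace2 R x y)"
    and C: "cons_ok n \<alpha> R l0 l1"
    using F unfolding PP_feasible_def cons_ok_def by blast
  have o: "PP_objective n \<alpha> R = (l0+l1)/2" by (rule objective[OF C])
  have f: "4 * ((l0+l1)/2) = 2*(l0+l1)" by simp
  show "\<And>w. cnj w * w = 1 \<Longrightarrow> 4 * PP_objective n \<alpha> R - Re (w * cis (2*\<alpha>)) * Re (Bf R (XX n \<alpha> 0) (XX n \<alpha> 1)) \<le> 4 - 4*cos (2 * (real n * \<alpha>)) * Re w"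
  proof -
    fix w :: complex assume "cnj w * w = 1"
    from blocks_sum[OF R C I this] show "4 * PP_objective n \<alpha> R - Re (w * cis (2*\<alpha>)) * Re (Bf R (XX n \<alpha> 0) (XX n \<alpha> 1)) \<le> 4 - 4*cos (2 * (real n * \<alpha>)) * Re w"
      unfolding o f .
  qed
  show "\<bar>Re (Bf R (XX n \<alpha> 0) (XX n \<alpha> 1))\<bar> \<le> 4 * PP_objective n \<alpha> R"
    using tau_bound[OF R C I] unfolding o f .
qed


lemma cmod_bound:
  fixes c y t x :: real
  assumes "(c - y * cos t)^2 + (y * sin t)^2 \<le> (1 - x)^2" "1 - x \<ge> 0"
  shows "cmod (complex_of_real c - y * cis t) \<le> 1 - x"
proof -
  have "cmod (complex_of_real c - y * cis t) = sqrt ((c - y * cos t)^2 + (y * sin t)^2)"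
    by (simp add: cmod_def power2_eq_square)
  also have "\<dots> \<le> sqrt ((1-x)^2)" using assms(1) by (rule real_sqrt_le_mono)
  also have "\<dots> = 1 - x" using assms(2) by simp
  finally show ?thesis .
qed

lemma wcomplex: "p^2 + q^2 = 1 \<Longrightarrow> cnj (Complex p q) * Complex p q = 1"
  by (simp add: complex_eq_iff power2_eq_square)

theorem mainTheorem9:
  fixes n :: nat and \<alpha> :: real
  assumes "n \<ge> 1" and "0 < \<alpha>" and "\<alpha> < pi / (4 * real n)"
  defines "P \<equiv> (if cos (2 * real n * \<alpha>) > 1 / (cos (2 * \<alpha>) + sin (2 * \<alpha>))
               then (1 - (cos (2 * real n * \<alpha>))\<^sup>2) /
                    (2 * (1 - cos (2 * real n * \<alpha>) * cos (2 * \<alpha>)))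
               else 1 - cos (2 * real n * \<alpha>) * sin (2 * \<alpha>))"
  shows "(\<exists>R. PP_feasible n \<alpha> R \<and> PP_objective n \<alpha> R = P) \<and>
         (\<forall>R. PP_feasible n \<alpha> R \<longrightarrow> PP_objective n \<alpha> R \<le> P)"
proof -
  define c where "c = cos (2 * real n * \<alpha>)"
  define k where "k = cos (2 * \<alpha>)"
  define s where "s = sin (2 * \<alpha>)"
  have nr: "real n \<ge> 1" using assms(1) by simp
  have b1: "2 * real n * \<alpha> < pi / 2"
  proof -
    have "\<alpha> * (4 * real n) < pi" using assms(3) nr by (simp add: pos_less_divide_eq mult.commute)
    then show ?thesis by (simp add: field_simps)
  qed
  have b0: "0 < 2 * real n * \<alpha>" using assms(2) nr by simp
  have a1: "2 * \<alpha> \<le> 2 * real n * \<alpha>" using assms(2) nr by simp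
  have eqb: "2 * (real n * \<alpha>) = 2 * real n * \<alpha>" by simp
  have sp: "0 < sin (2 * real n * \<alpha>)" using b0 b1 pi_gt_zero by (intro sin_gt_zero) linarith+
  have S: "sin (2 * (real n * \<alpha>)) \<noteq> 0" unfolding eqb using sp by simp
  have c0: "0 < c" unfolding c_def using b0 b1 pi_gt_zero by (intro cos_gt_zero_pi) linarith+
  have c1: "c < 1" unfolding c_def using cos_monotone_0_pi[of 0 "2 * real n * \<alpha>"] b0 b1 by simp
  have k0: "0 < k" unfolding k_def using a1 b1 assms(2) pi_gt_zero by (intro cos_gt_zero_pi) linarith+
  have k1: "k < 1" unfolding k_def using cos_monotone_0_pi[of 0 "2 * \<alpha>"] a1 b1 assms(2) by simp
  have s0: "0 < s" unfolding s_def using a1 b1 assms(2) pi_gt_zero by (intro sin_gt_zero) linarith+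
  have ks: "k^2 + s^2 = 1" unfolding k_def s_def by (simp add: sin_cos_squared_add2)
  have cC: "cos (2 * (real n * \<alpha>)) = c" unfolding c_def eqb ..
  have ks0: "0 < k + s" using k0 s0 by simp
  have UB: "4 * PP_objective n \<alpha> R - (p*k - q*s) * Re (Bf R (XX n \<alpha> 0) (XX n \<alpha> 1)) \<le> 4 - 4*c*p"
    if "PP_feasible n \<alpha> R" "p^2 + q^2 = 1" for R p q
    using upper(1)[OF that(1) wcomplex[OF that(2)]] unfolding cC k_def s_def by simp
  have TB: "\<bar>Re (Bf R (XX n \<alpha> 0) (XX n \<alpha> 1))\<bar> \<le> 4 * PP_objective n \<alpha> R" if "PP_feasible n \<alpha> R" for R
    using upper(2)[OF that] .
  show ?thesis
  proof (cases "c > 1 / (k + s)")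
    case True
    have P: "P = (1 - c^2) / (2 * (1 - c*k))" unfolding P_def using True unfolding c_def k_def s_def by simp
    define x where "x = (1 - c^2) / (2 * (1 - c*k))"
    have reg: "c * (k + s) > 1" using True ks0 by (simp add: divide_less_eq mult.commute)
    have ck0: "c*k < 1" using c0 c1 k0 k1 by (metis less_le_not_le mult_less_cancel_left2 order_less_le_trans)
    then have ck': "0 < 1 - c*k" by simp
    have xe: "2 * x * (1 - c*k) = 1 - c^2" using ck' unfolding x_def by (simp add: field_simps)
    have x0: "0 \<le> x" unfolding x_def using c0 c1 ck' by (intro divide_nonneg_pos) (auto intro: power_le_one)
    have pos: "(c - k)^2 + s^2 > 0" using s0 by (simp add: add_nonneg_pos)
    have "2 * (1 - x) * (1 - c*k) = (c - k)^2 + s^2"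
      using xe ks by (simp add: algebra_simps power2_eq_square)
    then have x1: "1 - x > 0" using pos ck' by (smt (verit) mult_pos_pos zero_less_mult_iff)
    have sq: "(c - x * k)^2 + (x * s)^2 = (1 - x)^2"
    proof -
      have "(c - x*k)^2 + (x*s)^2 = c^2 - 2*c*x*k + x^2 * (k^2 + s^2)" by (simp add: power2_eq_square algebra_simps)
      also have "\<dots> = c^2 - 2*c*x*k + x^2" using ks by simp
      also have "\<dots> = (1-x)^2" using xe by (simp add: power2_eq_square algebra_simps)
      finally show ?thesis .
    qed
    have Q: "cmod (complex_of_real (cos (2 * (real n * \<alpha>))) - x * cis (2*\<alpha>)) \<le> 1 - x"
      unfolding cC by (rule cmod_bound) (use sq x1 in \<open>auto simp: k_def s_def\<close>)
    have ex: "\<exists>R. PP_feasible n \<alpha> R \<and> PP_objective n \<alpha> R = x"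
      by (rule primal[OF S _ Q]) (use x0 in simp)
    have ub: "PP_objective n \<alpha> R \<le> x" if F: "PP_feasible n \<alpha> R" for R
    proof -
      have "(2 * PP_objective n \<alpha> R) / 2 \<le> x"
      proof (rule regime1_real[OF ks c0 c1 k0 k1 s0 reg x_def])
        fix p q :: real assume "p^2 + q^2 = 1"
        then show "2 * (2 * PP_objective n \<alpha> R) - (p*k - q*s) * Re (Bf R (XX n \<alpha> 0) (XX n \<alpha> 1)) \<le> 4 - 4*c*p"
          using UB[OF F] by simp
      next
        show "\<bar>Re (Bf R (XX n \<alpha> 0) (XX n \<alpha> 1))\<bar> \<le> 2 * (2 * PP_objective n \<alpha> R)" using TB[OF F] by simp
      qed
      then show ?thesis by simp
    qed
    show ?thesis unfolding P x_def[symmetric] using ex ub by blast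
  next
    case False
    have P: "P = 1 - c * s" unfolding P_def using False unfolding c_def k_def s_def by simp
    have reg: "c * (k + s) \<le> 1" using False ks0 by (simp add: not_less le_divide_eq mult.commute)
    have y: "\<bar>c*k\<bar> \<le> 1 - c*s" using reg c0 k0 by (simp add: algebra_simps)
    have sq: "(c - (c*k) * k)^2 + ((c*k) * s)^2 \<le> (1 - (1 - c*s))^2"
    proof -
      have e1: "(c - (c*k) * k)^2 + ((c*k) * s)^2 = c^2 * ((1 - k^2)^2 + k^2 * s^2)" by (simp add: power2_eq_square algebra_simps)
      have e2: "1 - k^2 = s^2" using ks by simp
      have e3: "(s^2)^2 + k^2 * s^2 = s^2 * (k^2 + s^2)" by (simp add: power2_eq_square algebra_simps)
      have "(c - (c*k) * k)^2 + ((c*k) * s)^2 = c^2 * s^2" unfolding e1 e2 e3 ks by simp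
      also have "\<dots> = (1 - (1 - c*s))^2" by (simp add: power_mult_distrib)
      finally show ?thesis by simp
    qed
    have Q: "cmod (complex_of_real (cos (2 * (real n * \<alpha>))) - (c*k) * cis (2*\<alpha>)) \<le> 1 - (1 - c*s)"
      unfolding cC by (rule cmod_bound) (use sq c0 s0 in \<open>auto simp: k_def s_def\<close>)
    have ex: "\<exists>R. PP_feasible n \<alpha> R \<and> PP_objective n \<alpha> R = 1 - c*s"
      by (rule primal[OF S y Q])
    have ub: "PP_objective n \<alpha> R \<le> 1 - c*s" if F: "PP_feasible n \<alpha> R" for R
    proof -
      have "s^2 + k^2 = 1" using ks by simp
      from UB[OF F this] show ?thesis by (simp add: algebra_simps)
    qed
    show ?thesis unfolding P using ex ub by blast
  qed
qed

end
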